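(* Let $G_u=(V,E_u)$ be a connected simple undirected graph on $n\ge2$ vertices and let $T_0$ be a spanning tree of $G_u$ with maximum degree $D_0$ and diameter $\Delta_0$. For each integer $K$ with $0\le K\le|E_u\setminus E(T_0)|$, let $H_K$ be the directed graph obtained as follows. (Step 2) Starting with $T:=T_0$, repeat $K$ times: choose an edge $\{u^\star,v^\star\}\in E_u\setminus E(T)$ maximizing the distance between $u^\star$ and $v^\star$ in the current graph $T$ (ties broken arbitrarily) and add it to $T$. (Step 3) Let $E_b$ be the set of bridges of the resulting graph $T$ and let the bridge-connected components be the connected components of $T$ after deleting all bridges. In each bridge-connected component $C$, perform a depth-first search from an arbitrary vertex, obtaining a DFS tree $T_C$ and preorder numbers $pre(\cdot)$; for each edge $\{u,v\}$ of $C$ with $pre(u)<pre(v)$, add the directed link $(u,v)$ to $H_K$ if $\{u,v\}\in T_C$, and the directed link $(v,u)$ otherwise. Finally, for each bridge $\{u,v\}\in E_b$ add both $(u,v)$ and $(v,u)$ to $H_K$. Then every $H_K$ is strongly connected, and $$\min_{K}\Phi(H_K)\le 2D_0\,\Delta_0^2\,(1+D_0)^{4\Delta_0}.$$ In particular this holds when $T_0$ is a minimum-degree spanning tree of $G_u$.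
   Context: For a strongly connected directed graph $H$ on $V$ without self-loops, let $D_H^+$ and $D_H^-$ denote its maximum out-degree and maximum in-degree, and $\Delta(H)$ its diameter (the maximum, over ordered pairs of vertices, of the length of a shortest directed path). The design objective is $\Phi(H):=(D_H^++D_H^-)\,\Delta(H)^2\,(1+D_H^+)^{4\Delta(H)}$. A bridge of an undirected graph is an edge whose removal increases the number of connected components. The preorder number $pre(v)$ is the position in $\{1,\dots,|C|\}$ at which $v$ is first visited by the depth-first search. A minimum-degree spanning tree is a spanning tree minimizing the maximum vertex degree. *)

theory Defs
  imports Main
begin

definition simple_ugraph :: "'a set \<Rightarrow> 'a set set \<Rightarrow> bool" where
  "simple_ugraph V E \<longleftrightarrow> finite V \<and> E \<subseteq> {{u,v} | u v. u \<in> V \<and> v \<in> V \<and> u \<noteq> v}"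

definition uedges :: "'a set set \<Rightarrow> ('a \<times> 'a) set" where
  "uedges E = {(u,v). {u,v} \<in> E}"

definition uconnected :: "'a set \<Rightarrow> 'a set set \<Rightarrow> bool" where
  "uconnected V E \<longleftrightarrow> (\<forall>u\<in>V. \<forall>v\<in>V. (u,v) \<in> (uedges E)\<^sup>*)"

definition ucycle :: "'a set set \<Rightarrow> 'a list \<Rightarrow> bool" where
  "ucycle E xs \<longleftrightarrow> length xs \<ge> 3 \<and> distinct xs \<and>
     (\<forall>i < length xs. {xs ! i, xs ! ((i + 1) mod length xs)} \<in> E)"

definition spanning_tree :: "'a set \<Rightarrow> 'a set set \<Rightarrow> 'a set set \<Rightarrow> bool" where
  "spanning_tree V E T \<longleftrightarrow> T \<subseteq> E \<and> uconnected V T \<and> (\<nexists>xs. ucycle T xs)"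

definition udist :: "'a set set \<Rightarrow> 'a \<Rightarrow> 'a \<Rightarrow> nat" where
  "udist E u v = (LEAST k. (u,v) \<in> (uedges E) ^^ k)"

definition udiam :: "'a set \<Rightarrow> 'a set set \<Rightarrow> nat" where
  "udiam V E = Max {udist E u v | u v. u \<in> V \<and> v \<in> V}"

definition udeg :: "'a set set \<Rightarrow> 'a \<Rightarrow> nat" where
  "udeg E v = card {e \<in> E. v \<in> e}"

definition umaxdeg :: "'a set \<Rightarrow> 'a set set \<Rightarrow> nat" where
  "umaxdeg V E = Max (udeg E ` V)"

definition ucomponents :: "'a set \<Rightarrow> 'a set set \<Rightarrow> 'a set set" where
  "ucomponents V E = {{v \<in> V. (u,v) \<in> (uedges E)\<^sup>*} | u. u \<in> V}"

definition bridges :: "'a set \<Rightarrow> 'a set set \<Rightarrow> 'a set set" where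
  "bridges V E = {e \<in> E. card (ucomponents V (E - {e})) > card (ucomponents V E)}"

definition greedy_step :: "'a set set \<Rightarrow> ('a set set \<times> 'a set set) set" where
  "greedy_step Eu = {(T, T'). \<exists>u v. {u,v} \<in> Eu - T \<and>
       (\<forall>a b. {a,b} \<in> Eu - T \<longrightarrow> udist T a b \<le> udist T u v) \<and>
       T' = insert {u,v} T}"

text \<open>Reachable states (stack, visit order, tree edges) of a DFS from root r
  on the graph with edge set EC; neighbours are chosen arbitrarily.
  The search is complete when the stack is empty.\<close>
inductive dfs_reach :: "'a set set \<Rightarrow> 'a \<Rightarrow> 'a list \<Rightarrow> 'a list \<Rightarrow> 'a set set \<Rightarrow> bool"
  for EC :: "'a set set" and r :: 'a where
  start: "dfs_reach EC r [r] [r] {}"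
| descend: "dfs_reach EC r (u # st) vis Tr \<Longrightarrow> {u,v} \<in> EC \<Longrightarrow> v \<notin> set vis \<Longrightarrow>
      dfs_reach EC r (v # u # st) (vis @ [v]) (insert {u,v} Tr)"
| backtrack: "dfs_reach EC r (u # st) vis Tr \<Longrightarrow> (\<forall>v. {u,v} \<in> EC \<longrightarrow> v \<in> set vis) \<Longrightarrow>
      dfs_reach EC r st vis Tr"

text \<open>Preorder number (1-based position in the visit order).\<close>
definition pre :: "'a list \<Rightarrow> 'a \<Rightarrow> nat" where
  "pre vis v = (THE i. i < length vis \<and> vis ! i = v) + 1"

definition comp_edges :: "'a set set \<Rightarrow> 'a set set \<Rightarrow> 'a set \<Rightarrow> 'a set set" where
  "comp_edges E Eb C = {e \<in> E - Eb. e \<subseteq> C}"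

definition step3_output :: "'a set \<Rightarrow> 'a set set \<Rightarrow> ('a \<times> 'a) set \<Rightarrow> bool" where
  "step3_output V E H \<longleftrightarrow>
    (let Eb = bridges V E; Cs = ucomponents V (E - Eb) in
     \<exists>r vis Tr. (\<forall>C\<in>Cs. r C \<in> C \<and> dfs_reach (comp_edges E Eb C) (r C) [] (vis C) (Tr C)) \<and>
       H = (\<Union>C\<in>Cs.
              {(u,v). {u,v} \<in> comp_edges E Eb C \<and> pre (vis C) u < pre (vis C) v \<and> {u,v} \<in> Tr C}
            \<union> {(v,u). {u,v} \<in> comp_edges E Eb C \<and> pre (vis C) u < pre (vis C) v \<and> {u,v} \<notin> Tr C})
           \<union> {(u,v). {u,v} \<in> Eb})"

definition strongly_connected :: "'a set \<Rightarrow> ('a \<times> 'a) set \<Rightarrow> bool" where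
  "strongly_connected V H \<longleftrightarrow> (\<forall>u\<in>V. \<forall>v\<in>V. (u,v) \<in> H\<^sup>*)"

definition outdeg_max :: "'a set \<Rightarrow> ('a \<times> 'a) set \<Rightarrow> nat" where
  "outdeg_max V H = Max ((\<lambda>v. card {w. (v,w) \<in> H}) ` V)"

definition indeg_max :: "'a set \<Rightarrow> ('a \<times> 'a) set \<Rightarrow> nat" where
  "indeg_max V H = Max ((\<lambda>v. card {w. (w,v) \<in> H}) ` V)"

definition ddist :: "('a \<times> 'a) set \<Rightarrow> 'a \<Rightarrow> 'a \<Rightarrow> nat" where
  "ddist H u v = (LEAST k. (u,v) \<in> H ^^ k)"

definition ddiam :: "'a set \<Rightarrow> ('a \<times> 'a) set \<Rightarrow> nat" where
  "ddiam V H = Max {ddist H u v | u v. u \<in> V \<and> v \<in> V}"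

definition Phi :: "'a set \<Rightarrow> ('a \<times> 'a) set \<Rightarrow> nat" where
  "Phi V H = (outdeg_max V H + indeg_max V H) * (ddiam V H)^2 * (1 + outdeg_max V H) ^ (4 * ddiam V H)"

end

theory Submission
  imports Defs
begin


lemma uedges_sym: "(a,b) \<in> uedges E \<Longrightarrow> (b,a) \<in> uedges E"
  by (simp add: uedges_def insert_commute)

lemma rt_sym: "(a,b) \<in> (uedges E)\<^sup>* \<Longrightarrow> (b,a) \<in> (uedges E)\<^sup>*"
proof (induction rule: rtrancl_induct)
  case base then show ?case by simp
next
  case (step y z)
  then show ?case by (meson uedges_sym converse_rtrancl_into_rtrancl)
qed

lemma uedges_mono: "E \<subseteq> F \<Longrightarrow> uedges E \<subseteq> uedges F"
  by (auto simp: uedges_def)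

lemma rt_mono: "E \<subseteq> F \<Longrightarrow> (a,b) \<in> (uedges E)\<^sup>* \<Longrightarrow> (a,b) \<in> (uedges F)\<^sup>*"
  using rtrancl_mono[OF uedges_mono] by blast

lemma crossing: "(a,b) \<in> R\<^sup>* \<Longrightarrow> a \<in> S \<Longrightarrow> b \<notin> S \<Longrightarrow> \<exists>x y. (x,y) \<in> R \<and> x \<in> S \<and> y \<notin> S"
  by (induction rule: rtrancl_induct) auto

lemma insert_edge_split:
  assumes "(a,c) \<in> (uedges (insert {x,y} G))\<^sup>*"
  shows "(a,c) \<in> (uedges G)\<^sup>* \<or> (((a,x) \<in> (uedges G)\<^sup>* \<or> (a,y) \<in> (uedges G)\<^sup>*) \<and>
          ((x,c) \<in> (uedges G)\<^sup>* \<or> (y,c) \<in> (uedges G)\<^sup>*))"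
  using assms
proof (induction rule: rtrancl_induct)
  case base then show ?case by simp
next
  case (step c d)
  show ?case
  proof (cases "{c,d} \<in> G")
    case True
    then have cd: "(c,d) \<in> uedges G" by (simp add: uedges_def)
    from step.IH show ?thesis
      using cd rtrancl_into_rtrancl[of _ _ "uedges G"] by blast
  next
    case False
    with step.hyps(2) have "{c,d} = {x,y}" by (simp add: uedges_def)
    then have cd: "(c = x \<and> d = y) \<or> (c = y \<and> d = x)" by (auto simp: doubleton_eq_iff)
    from step.IH cd show ?thesis by auto
  qed
qed

lemma conn_not_bridge:
  assumes "e = {a,b}" "e \<in> E" "(a,b) \<in> (uedges (E-{e}))\<^sup>*"
  shows "e \<notin> bridges V E"
proof -
  have "uedges E \<subseteq> (uedges (E-{e}))\<^sup>*"
  proof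
    fix p assume "p \<in> uedges E"
    then obtain x y where p: "p = (x,y)" "{x,y} \<in> E" by (auto simp: uedges_def)
    show "p \<in> (uedges (E-{e}))\<^sup>*"
    proof (cases "{x,y} = e")
      case True
      then have "(x = a \<and> y = b) \<or> (x = b \<and> y = a)" using assms(1) by (auto simp: doubleton_eq_iff)
      then show ?thesis using assms(3) rt_sym[OF assms(3)] p(1) by auto
    next
      case False
      then show ?thesis using p by (auto simp: uedges_def)
    qed
  qed
  then have "(uedges E)\<^sup>* \<subseteq> (uedges (E-{e}))\<^sup>*" by (rule rtrancl_subset_rtrancl)
  moreover have "(uedges (E-{e}))\<^sup>* \<subseteq> (uedges E)\<^sup>*" by (rule rtrancl_mono[OF uedges_mono]) auto
  ultimately have "(uedges E)\<^sup>* = (uedges (E-{e}))\<^sup>*" by blast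
  then have "ucomponents V E = ucomponents V (E-{e})" unfolding ucomponents_def by (simp only:)
  then show ?thesis unfolding bridges_def by simp
qed

lemma bridge_disconn:
  assumes h: "{x,y} \<in> bridges V E" shows "(x,y) \<notin> (uedges (E-{{x,y}}))\<^sup>*"
proof
  assume c: "(x,y) \<in> (uedges (E-{{x,y}}))\<^sup>*"
  have "{x,y} \<in> E" using h unfolding bridges_def by simp
  from conn_not_bridge[OF refl this c] h show False by simp
qed

lemma card_image_less:
  assumes "finite A" "X \<in> A" "Y \<in> A" "X \<noteq> Y" "h X = h Y"
  shows "card (h ` A) < card A"
proof -
  have "h ` A = insert (h X) (h ` (A-{X}))" using assms(2) by (metis image_insert insert_Diff)
  moreover have "h X \<in> h ` (A-{X})" using assms(3,4,5) by simp
  ultimately have "h ` A = h ` (A - {X})" by (simp add: insert_absorb)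
  also have "card \<dots> \<le> card (A - {X})" using assms by (intro card_image_le) auto
  also have "\<dots> < card A" using assms(1,2) by (rule card_Diff1_less)
  finally show ?thesis .
qed

lemma disconn_bridge:
  assumes "finite V" "e = {a,b}" "e \<in> E" "a \<in> V" "b \<in> V"
    and nc: "(a,b) \<notin> (uedges (E-{e}))\<^sup>*"
  shows "e \<in> bridges V E"
proof -
  define R where "R = (uedges E)\<^sup>*"
  define R' where "R' = (uedges (E-{e}))\<^sup>*"
  define h where "h X = {v \<in> V. \<exists>x\<in>X. (x,v) \<in> R}" for X
  define A where "A = ucomponents V (E-{e})"
  have A: "A = (\<lambda>u. {v\<in>V. (u,v) \<in> R'}) ` V" unfolding A_def ucomponents_def R'_def
    by (simp add: setcompr_eq_image)
  have R'R: "R' \<subseteq> R" unfolding R_def R'_def by (rule rtrancl_mono[OF uedges_mono]) auto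
  have hc: "h {v\<in>V. (u,v) \<in> R'} = {v\<in>V. (u,v) \<in> R}" if "u \<in> V" for u
  proof
    show "h {v\<in>V. (u,v) \<in> R'} \<subseteq> {v\<in>V. (u,v) \<in> R}"
    proof
      fix w assume "w \<in> h {v\<in>V. (u,v) \<in> R'}"
      then obtain x where x: "w \<in> V" "(u,x) \<in> R'" "(x,w) \<in> R" unfolding h_def by blast
      have "(u,x) \<in> R" using R'R x(2) by (rule subsetD)
      then have "(u,w) \<in> R" using x(3) unfolding R_def by (rule rtrancl_trans)
      then show "w \<in> {v\<in>V. (u,v) \<in> R}" using x(1) by simp
    qed
    show "{v\<in>V. (u,v) \<in> R} \<subseteq> h {v\<in>V. (u,v) \<in> R'}"
    proof
      fix w assume "w \<in> {v\<in>V. (u,v) \<in> R}"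
      moreover have "u \<in> {v\<in>V. (u,v) \<in> R'}" using that unfolding R'_def by simp
      ultimately show "w \<in> h {v\<in>V. (u,v) \<in> R'}" unfolding h_def by blast
    qed
  qed
  have B: "ucomponents V E = h ` A"
  proof -
    have "ucomponents V E = (\<lambda>u. {v\<in>V. (u,v) \<in> R}) ` V" unfolding ucomponents_def R_def
      by (simp add: setcompr_eq_image)
    also have "\<dots> = (\<lambda>u. h {v\<in>V. (u,v) \<in> R'}) ` V" using hc by (simp cong: image_cong)
    also have "\<dots> = h ` A" unfolding A image_image ..
    finally show ?thesis .
  qed
  have ab: "(a,b) \<in> R" using assms(2,3) unfolding R_def uedges_def by auto
  have ba: "(b,a) \<in> R" using rt_sym[of a b E] ab unfolding R_def by simp
  have Rab: "{v\<in>V. (a,v) \<in> R} = {v\<in>V. (b,v) \<in> R}"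
    using ab ba unfolding R_def by (auto intro: rtrancl_trans)
  have "card (h ` A) < card A"
  proof (rule card_image_less[of A "{v\<in>V. (a,v) \<in> R'}" "{v\<in>V. (b,v) \<in> R'}"])
    show "finite A" using A assms(1) by simp
    show "{v\<in>V. (a,v) \<in> R'} \<in> A" using A assms(4) by simp
    show "{v\<in>V. (b,v) \<in> R'} \<in> A" using A assms(5) by simp
    have "b \<in> {v\<in>V. (b,v) \<in> R'}" using assms(5) unfolding R'_def by simp
    moreover have "b \<notin> {v\<in>V. (a,v) \<in> R'}" using nc unfolding R'_def by simp
    ultimately show "{v\<in>V. (a,v) \<in> R'} \<noteq> {v\<in>V. (b,v) \<in> R'}" by blast
    show "h {v\<in>V. (a,v) \<in> R'} = h {v\<in>V. (b,v) \<in> R'}"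
      using hc[OF assms(4)] hc[OF assms(5)] Rab by simp
  qed
  then show ?thesis using B assms(3) unfolding bridges_def A_def by simp
qed

lemma nonbridge_conn:
  assumes "finite V" "e = {a,b}" "e \<in> E" "a \<in> V" "b \<in> V" "e \<notin> bridges V E"
  shows "(a,b) \<in> (uedges (E-{e}))\<^sup>*"
  using disconn_bridge[OF assms(1-5)] assms(6) by blast



lemma nb2:
  assumes fin: "finite V" and simpl: "\<forall>f\<in>E. \<exists>x y. f = {x,y} \<and> x\<in>V \<and> y\<in>V \<and> x\<noteq>y"
    and finE: "finite E"
    and e: "e = {a,b}" "e \<in> E" "e \<notin> bridges V E" "a\<in>V" "b\<in>V"
  shows "(a,b) \<in> (uedges ((E - bridges V E) - {e}))\<^sup>*"
proof -
  let ?Eb = "bridges V E"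
  have EbE: "?Eb \<subseteq> E" unfolding bridges_def by blast
  have finEb: "finite ?Eb" using finE EbE by (rule finite_subset[rotated])
  have main: "(a,b) \<in> (uedges ((E-{e}) - B0))\<^sup>*" if "B0 \<subseteq> ?Eb" for B0
  proof -
    have "finite B0" using finEb that by (rule finite_subset[rotated])
    from this that show ?thesis
    proof (induction rule: finite_subset_induct)
      case empty
      show ?case using nonbridge_conn[OF fin e(1,2,4,5,3)] by simp
    next
      case (insert f B)
      let ?Gz = "(E-{e}) - B"
      let ?G = "(E-{e}) - insert f B"
      have fb: "f \<in> ?Eb" using insert.hyps(2) .
      show ?case
      proof (cases "f \<in> ?Gz")
        case False
        then have sub: "?Gz \<subseteq> ?G" by blast
        show ?thesis using rt_mono[OF sub insert.IH] .
      next
        case True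
        have "f \<in> E" using fb EbE by blast
        then obtain x y where xy: "f = {x,y}" using simpl by blast
        have Gz: "?Gz = insert {x,y} ?G" using True xy by blast
        show ?thesis
        proof (rule ccontr)
          assume nab: "(a,b) \<notin> (uedges ?G)\<^sup>*"
          have ih: "(a,b) \<in> (uedges (insert {x,y} ?G))\<^sup>*" using insert.IH Gz by simp
          from insert_edge_split[OF ih] nab have
            disj: "((a,x) \<in> (uedges ?G)\<^sup>* \<or> (a,y) \<in> (uedges ?G)\<^sup>*) \<and>
                   ((x,b) \<in> (uedges ?G)\<^sup>* \<or> (y,b) \<in> (uedges ?G)\<^sup>*)" by blast
          have GE: "?G \<subseteq> E - {f}" by blast
          have GEr: "(p,q) \<in> (uedges (E-{f}))\<^sup>*" if "(p,q) \<in> (uedges ?G)\<^sup>*" for p q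
            using rt_mono[OF GE that] .
          have "e \<noteq> f" using e(3) fb by blast
          then have "{a,b} \<in> E - {f}" using e(1,2) by blast
          then have abE: "(a,b) \<in> (uedges (E-{f}))\<^sup>*" unfolding uedges_def by blast
          have "(x,y) \<in> (uedges (E-{f}))\<^sup>*"
          proof -
            { assume 1: "(a,x) \<in> (uedges ?G)\<^sup>*" and 2: "(x,b) \<in> (uedges ?G)\<^sup>*"
              have False using rtrancl_trans[OF 1 2] nab by blast }
            moreover
            { assume 1: "(a,y) \<in> (uedges ?G)\<^sup>*" and 2: "(y,b) \<in> (uedges ?G)\<^sup>*"
              have False using rtrancl_trans[OF 1 2] nab by blast }
            moreover
            { assume 1: "(a,x) \<in> (uedges ?G)\<^sup>*" and 2: "(y,b) \<in> (uedges ?G)\<^sup>*"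
              have xa: "(x,a) \<in> (uedges (E-{f}))\<^sup>*" using GEr[OF rt_sym[OF 1]] .
              have by': "(b,y) \<in> (uedges (E-{f}))\<^sup>*" using GEr[OF rt_sym[OF 2]] .
              have "(x,y) \<in> (uedges (E-{f}))\<^sup>*" using rtrancl_trans[OF rtrancl_trans[OF xa abE] by'] . }
            moreover
            { assume 1: "(a,y) \<in> (uedges ?G)\<^sup>*" and 2: "(x,b) \<in> (uedges ?G)\<^sup>*"
              have ya: "(y,a) \<in> (uedges (E-{f}))\<^sup>*" using GEr[OF rt_sym[OF 1]] .
              have bx: "(b,x) \<in> (uedges (E-{f}))\<^sup>*" using GEr[OF rt_sym[OF 2]] .
              have "(y,x) \<in> (uedges (E-{f}))\<^sup>*" using rtrancl_trans[OF rtrancl_trans[OF ya abE] bx] .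
              then have "(x,y) \<in> (uedges (E-{f}))\<^sup>*" by (rule rt_sym) }
            ultimately show ?thesis using disj by blast
          qed
          with bridge_disconn[of x y V E] fb xy show False by simp
        qed
      qed
    qed
  qed
  have "(E-{e}) - ?Eb = (E - ?Eb) - {e}" by blast
  with main[OF order_refl] show ?thesis by simp
qed

lemma restrict_comp:
  assumes "(a,b) \<in> (uedges G)\<^sup>*" "G \<subseteq> F" "\<forall>f\<in>F. \<exists>x y. f={x,y} \<and> x\<in>V \<and> y\<in>V"
    "C = {v\<in>V. (c,v) \<in> (uedges F)\<^sup>*}" "a \<in> C"
  shows "(a,b) \<in> (uedges {f\<in>G. f \<subseteq> C})\<^sup>* \<and> b \<in> C"
  using assms(1)
proof (induction rule: rtrancl_induct)
  case base
  then show ?case using assms(5) by simp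
next
  case (step b d)
  have bd: "{b,d} \<in> G" using step.hyps(2) unfolding uedges_def by simp
  then have "{b,d} \<in> F" using assms(2) by blast
  then obtain x y where xy: "{b,d} = {x,y}" "x\<in>V" "y\<in>V" using assms(3) by blast
  have dV: "d \<in> V" using xy by (auto simp: doubleton_eq_iff)
  have cb: "(c,b) \<in> (uedges F)\<^sup>*" using step.IH assms(4) by simp
  have "(b,d) \<in> uedges F" using \<open>{b,d} \<in> F\<close> unfolding uedges_def by simp
  then have "(c,d) \<in> (uedges F)\<^sup>*" using cb by (rule rtrancl_into_rtrancl[rotated])
  then have dC: "d \<in> C" using dV assms(4) by simp
  have "{b,d} \<subseteq> C" using dC step.IH by simp
  then have "(b,d) \<in> uedges {f\<in>G. f \<subseteq> C}" using bd unfolding uedges_def by simp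
  then show ?case using step.IH dC by (meson rtrancl_into_rtrancl)
qed

lemma path_exists:
  assumes "(a,c) \<in> R\<^sup>*"
  shows "\<exists>xs. xs \<noteq> [] \<and> hd xs = a \<and> last xs = c \<and> distinct xs \<and>
           (\<forall>i. Suc i < length xs \<longrightarrow> (xs!i, xs!Suc i) \<in> R)"
  using assms
proof (induction rule: rtrancl_induct)
  case base
  show ?case by (rule exI[of _ "[a]"]) simp
next
  case (step c d)
  then obtain xs where xs: "xs \<noteq> []" "hd xs = a" "last xs = c" "distinct xs"
    "\<forall>i. Suc i < length xs \<longrightarrow> (xs!i, xs!Suc i) \<in> R" by blast
  show ?case
  proof (cases "d \<in> set xs")
    case True
    then obtain i where i: "i < length xs" "xs!i = d" by (auto simp: in_set_conv_nth)
    let ?ys = "take (Suc i) xs"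
    have ys: "?ys = take i xs @ [xs!i]" using i(1) by (rule take_Suc_conv_app_nth)
    show ?thesis
    proof (rule exI[of _ ?ys], intro conjI allI impI)
      show "?ys \<noteq> []" using xs(1) by simp
      show "hd ?ys = a" using xs(1,2) by (simp add: hd_take)
      show "last ?ys = d" using ys i(2) by simp
      show "distinct ?ys" using xs(4) by simp
      fix j assume "Suc j < length ?ys"
      then show "(?ys!j, ?ys!Suc j) \<in> R" using xs(5) by simp
    qed
  next
    case False
    let ?ys = "xs @ [d]"
    show ?thesis
    proof (rule exI[of _ ?ys], intro conjI allI impI)
      show "?ys \<noteq> []" by simp
      show "hd ?ys = a" using xs(1,2) by simp
      show "last ?ys = d" by simp
      show "distinct ?ys" using xs(4) False by simp
      fix j assume j: "Suc j < length ?ys"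
      show "(?ys!j, ?ys!Suc j) \<in> R"
      proof (cases "Suc j < length xs")
        case True
        then show ?thesis using xs(5) by (simp add: nth_append)
      next
        case False
        then have "Suc j = length xs" using j by simp
        then have "xs!j = c" using xs(1,3) by (metis diff_Suc_1 last_conv_nth)
        then show ?thesis using \<open>Suc j = length xs\<close> step.hyps(2) by (simp add: nth_append)
      qed
    qed
  qed
qed

lemma tree_edge_disconn:
  assumes nocyc: "\<nexists>xs. ucycle T xs" and e: "e = {a,b}" "e \<in> T" "a \<noteq> b"
  shows "(a,b) \<notin> (uedges (T-{e}))\<^sup>*"
proof
  assume "(a,b) \<in> (uedges (T-{e}))\<^sup>*"
  from path_exists[OF this] obtain xs where xs: "xs \<noteq> []" "hd xs = a" "last xs = b" "distinct xs"
    "\<forall>i. Suc i < length xs \<longrightarrow> (xs!i, xs!Suc i) \<in> uedges (T-{e})" by blast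
  have h0: "xs!0 = a" using xs(1,2) by (simp add: hd_conv_nth)
  have hl: "xs!(length xs - 1) = b" using xs(1,3) by (simp add: last_conv_nth)
  have "length xs \<noteq> 1" using h0 hl e(3) by auto
  moreover have "length xs \<noteq> 2"
  proof
    assume "length xs = 2"
    then have "(xs!0, xs!1) \<in> uedges (T-{e})" using xs(5) by auto
    moreover have "xs!1 = b" using hl \<open>length xs = 2\<close> by simp
    ultimately show False using h0 e(1) unfolding uedges_def by simp
  qed
  moreover have "length xs \<noteq> 0" using xs(1) by simp
  ultimately have len: "length xs \<ge> 3" by linarith
  have "ucycle T xs"
    unfolding ucycle_def
  proof (intro conjI allI impI)
    show "length xs \<ge> 3" by (rule len)
    show "distinct xs" by (rule xs(4))
    fix i assume i: "i < length xs"
    show "{xs ! i, xs ! ((i + 1) mod length xs)} \<in> T"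
    proof (cases "Suc i < length xs")
      case True
      then have "(xs!i, xs!Suc i) \<in> uedges (T-{e})" using xs(5) by blast
      then show ?thesis using True unfolding uedges_def by simp
    next
      case False
      then have si: "Suc i = length xs" using i by simp
      have "i = length xs - 1" using si by linarith
      moreover have "(i+1) mod length xs = 0" using si by (metis Suc_eq_plus1 mod_self)
      ultimately have "{xs ! i, xs ! ((i + 1) mod length xs)} = {b,a}" using h0 hl by simp
      also have "\<dots> = e" using e(1) by (simp only: insert_commute)
      finally show ?thesis using e(2) by simp
    qed
  qed
  with nocyc show False by blast
qed



lemma pre_nth:
  assumes "distinct xs" "i < length xs" shows "pre xs (xs!i) = Suc i"
proof -
  have "(THE j. j < length xs \<and> xs!j = xs!i) = i"
    using assms by (intro the_equality) (auto simp: nth_eq_iff_index_eq)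
  then show ?thesis unfolding pre_def by simp
qed

lemma pre_bounds:
  assumes "distinct xs" "x \<in> set xs" shows "0 < pre xs x \<and> pre xs x \<le> length xs"
proof -
  obtain i where "i < length xs" "xs!i = x" using assms(2) by (auto simp: in_set_conv_nth)
  then show ?thesis using pre_nth[OF assms(1)] by auto
qed

lemma pre_inj:
  assumes "distinct xs" "x \<in> set xs" "y \<in> set xs" "pre xs x = pre xs y" shows "x = y"
proof -
  obtain i where i: "i < length xs" "xs!i = x" using assms(2) by (auto simp: in_set_conv_nth)
  obtain j where j: "j < length xs" "xs!j = y" using assms(3) by (auto simp: in_set_conv_nth)
  have "Suc i = Suc j" using pre_nth[OF assms(1) i(1)] pre_nth[OF assms(1) j(1)] i(2) j(2) assms(4) by simp
  then show ?thesis using i j by simp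
qed

lemma pre_app:
  assumes "distinct (xs@[v])" "x \<in> set xs" shows "pre (xs@[v]) x = pre xs x"
proof -
  obtain i where i: "i < length xs" "xs!i = x" using assms(2) by (auto simp: in_set_conv_nth)
  have "(xs@[v])!i = x" using i by (simp add: nth_append)
  moreover have "i < length (xs@[v])" using i by simp
  ultimately have "pre (xs@[v]) x = Suc i" using pre_nth[OF assms(1)] by metis
  moreover have "distinct xs" using assms(1) by simp
  ultimately show ?thesis using pre_nth[of xs i] i by simp
qed

lemma pre_app_last:
  assumes "distinct (xs@[v])" shows "pre (xs@[v]) v = Suc (length xs)"
proof -
  have "(xs@[v])!(length xs) = v" by simp
  then show ?thesis using pre_nth[OF assms, of "length xs"] by simp
qed

definition Hc :: "'a set set \<Rightarrow> 'a list \<Rightarrow> 'a set set \<Rightarrow> ('a \<times> 'a) set" where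
  "Hc EC vis Tr =
     {(a,b). {a,b} \<in> EC \<and> a \<in> set vis \<and> b \<in> set vis \<and> pre vis a < pre vis b \<and> {a,b} \<in> Tr}
   \<union> {(b,a). {a,b} \<in> EC \<and> a \<in> set vis \<and> b \<in> set vis \<and> pre vis a < pre vis b \<and> {a,b} \<notin> Tr}"

lemma Hc_mono:
  assumes d: "distinct (vis@[v])"
  shows "Hc EC vis Tr \<subseteq> Hc EC (vis@[v]) (insert {u,v} Tr)"
proof
  fix p assume "p \<in> Hc EC vis Tr"
  then obtain x y where p: "p = (x,y)" and
    c: "({x,y} \<in> EC \<and> x \<in> set vis \<and> y \<in> set vis \<and> pre vis x < pre vis y \<and> {x,y} \<in> Tr) \<or>
        ({y,x} \<in> EC \<and> y \<in> set vis \<and> x \<in> set vis \<and> pre vis y < pre vis x \<and> {y,x} \<notin> Tr)"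
    unfolding Hc_def by blast
  have nv: "v \<notin> set vis" using d by simp
  show "p \<in> Hc EC (vis@[v]) (insert {u,v} Tr)"
  proof (cases "{x,y} \<in> EC \<and> x \<in> set vis \<and> y \<in> set vis \<and> pre vis x < pre vis y \<and> {x,y} \<in> Tr")
    case True
    then have "pre (vis@[v]) x < pre (vis@[v]) y" using pre_app[OF d] by simp
    then show ?thesis using True p unfolding Hc_def by simp
  next
    case False
    with c have c2: "{y,x} \<in> EC" "y \<in> set vis" "x \<in> set vis" "pre vis y < pre vis x" "{y,x} \<notin> Tr" by blast+
    have "pre (vis@[v]) y < pre (vis@[v]) x" using pre_app[OF d] c2 by simp
    moreover have "{y,x} \<noteq> {u,v}" using nv c2(2,3) by (auto simp: doubleton_eq_iff)
    ultimately show ?thesis using c2 p unfolding Hc_def by simp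
  qed
qed

definition Inv :: "'a set set \<Rightarrow> 'a \<Rightarrow> 'a list \<Rightarrow> 'a list \<Rightarrow> 'a set set \<Rightarrow> bool" where
 "Inv EC r st vis Tr \<longleftrightarrow>
   distinct vis \<and> r \<in> set vis \<and> set st \<subseteq> set vis \<and>
   sorted_wrt (\<lambda>a b. pre vis b < pre vis a) st \<and>
   (st \<noteq> [] \<longrightarrow> last st = r) \<and>
   successively (\<lambda>a b. {a,b} \<in> EC) st \<and>
   (\<forall>y\<in>set vis - set st. \<forall>z. {y,z} \<in> EC \<longrightarrow> z \<in> set vis) \<and>
   (\<forall>x y. {x,y} \<in> EC \<longrightarrow> x \<in> set vis \<longrightarrow> y \<in> set vis \<longrightarrow> pre vis y < pre vis x \<longrightarrow> y \<notin> set st \<longrightarrow>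
      (\<forall>s\<in>set st. pre vis s < pre vis y \<or> pre vis x < pre vis s)) \<and>
   (\<forall>a b. {a,b} \<in> Tr \<longrightarrow> a \<in> set vis \<longrightarrow> b \<in> set vis \<longrightarrow> pre vis a < pre vis b \<longrightarrow>
      (\<forall>s\<in>set st. \<not> (pre vis a < pre vis s \<and> pre vis s < pre vis b))) \<and>
   (\<forall>e\<in>Tr. e \<subseteq> set vis) \<and>
   (\<forall>s\<in>set st. \<forall>w\<in>set vis. pre vis s \<le> pre vis w \<longrightarrow> (s,w) \<in> (Hc EC vis Tr)\<^sup>*) \<and>
   (\<forall>w\<in>set vis. (r,w) \<in> (Hc EC vis Tr)\<^sup>*) \<and>
   (\<forall>w\<in>set vis. if st = [] then (w,r) \<in> (Hc EC vis Tr)\<^sup>* else (\<exists>y\<in>set st. (w,y) \<in> (Hc EC vis Tr)\<^sup>*))"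

lemma inv_start: "Inv EC r [r] [r] {}"
  unfolding Inv_def by simp



lemma InvD:
  assumes "Inv EC r st vis Tr"
  shows "distinct vis" "r \<in> set vis" "set st \<subseteq> set vis"
   "sorted_wrt (\<lambda>a b. pre vis b < pre vis a) st"
   "st \<noteq> [] \<Longrightarrow> last st = r"
   "successively (\<lambda>a b. {a,b} \<in> EC) st"
   "\<And>y z. y\<in>set vis \<Longrightarrow> y \<notin> set st \<Longrightarrow> {y,z} \<in> EC \<Longrightarrow> z \<in> set vis"
   "\<And>x y s. {x,y} \<in> EC \<Longrightarrow> x \<in> set vis \<Longrightarrow> y \<in> set vis \<Longrightarrow> pre vis y < pre vis x \<Longrightarrow> y \<notin> set st \<Longrightarrow>
      s\<in>set st \<Longrightarrow> pre vis s < pre vis y \<or> pre vis x < pre vis s"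
   "\<And>a b s. {a,b} \<in> Tr \<Longrightarrow> a \<in> set vis \<Longrightarrow> b \<in> set vis \<Longrightarrow> pre vis a < pre vis b \<Longrightarrow>
      s\<in>set st \<Longrightarrow> \<not> (pre vis a < pre vis s \<and> pre vis s < pre vis b)"
   "\<And>e. e\<in>Tr \<Longrightarrow> e \<subseteq> set vis"
   "\<And>s w. s\<in>set st \<Longrightarrow> w\<in>set vis \<Longrightarrow> pre vis s \<le> pre vis w \<Longrightarrow> (s,w) \<in> (Hc EC vis Tr)\<^sup>*"
   "\<And>w. w\<in>set vis \<Longrightarrow> (r,w) \<in> (Hc EC vis Tr)\<^sup>*"
   "\<And>w. w\<in>set vis \<Longrightarrow> st = [] \<Longrightarrow> (w,r) \<in> (Hc EC vis Tr)\<^sup>*"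
   "\<And>w. w\<in>set vis \<Longrightarrow> st \<noteq> [] \<Longrightarrow> \<exists>y\<in>set st. (w,y) \<in> (Hc EC vis Tr)\<^sup>*"
  using assms unfolding Inv_def by auto

lemma inv_descend:
  assumes I: "Inv EC r (u#st) vis Tr" and uv: "{u,v} \<in> EC" and nv: "v \<notin> set vis"
  shows "Inv EC r (v#u#st) (vis@[v]) (insert {u,v} Tr)"
proof -
  note D = InvD[OF I]
  let ?vis = "vis@[v]"
  let ?Tr = "insert {u,v} Tr"
  have d': "distinct ?vis" using D(1) nv by simp
  have pa: "pre ?vis x = pre vis x" if "x \<in> set vis" for x using pre_app[OF d' that] .
  have pv: "pre ?vis v = Suc (length vis)" using pre_app_last[OF d'] .
  have pb: "pre vis x \<le> length vis" if "x \<in> set vis" for x using pre_bounds[OF D(1) that] by simp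
  have uvis: "u \<in> set vis" using D(3) by simp
  have stvis: "s \<in> set vis" if "s \<in> set st" for s using D(3) that by auto
  have sou: "pre vis s < pre vis u" if "s \<in> set st" for s using D(4) that by simp
  have HH: "(Hc EC vis Tr)\<^sup>* \<subseteq> (Hc EC ?vis ?Tr)\<^sup>*" by (rule rtrancl_mono[OF Hc_mono[OF d']])
  have uvH: "(u,v) \<in> Hc EC ?vis ?Tr"
  proof -
    have "pre ?vis u < pre ?vis v" using pa[OF uvis] pv pb[OF uvis] by simp
    then show ?thesis using uv uvis unfolding Hc_def by simp
  qed
  show ?thesis
    unfolding Inv_def
  proof (intro conjI)
    show "distinct ?vis" by (rule d')
    show "r \<in> set ?vis" using D(2) by simp
    show "set (v#u#st) \<subseteq> set ?vis" using D(3) by auto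
    show "sorted_wrt (\<lambda>a b. pre ?vis b < pre ?vis a) (v#u#st)"
    proof -
      have "\<forall>b\<in>set (u#st). pre ?vis b < pre ?vis v"
        using pa pv pb D(3) by (metis le_imp_less_Suc subsetD)
      moreover have "sorted_wrt (\<lambda>a b. pre ?vis b < pre ?vis a) (u#st)"
        by (rule sorted_wrt_mono_rel[OF _ D(4)]) (metis D(3) pa subsetD)
      ultimately show ?thesis by simp
    qed
    show "v#u#st \<noteq> [] \<longrightarrow> last (v#u#st) = r" using D(5) by simp
    show "successively (\<lambda>a b. {a,b} \<in> EC) (v#u#st)" using D(6) uv by (simp add: insert_commute)
    show "\<forall>y\<in>set ?vis - set (v#u#st). \<forall>z. {y,z} \<in> EC \<longrightarrow> z \<in> set ?vis"
      using D(7) by auto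
    show "\<forall>x y. {x,y} \<in> EC \<longrightarrow> x \<in> set ?vis \<longrightarrow> y \<in> set ?vis \<longrightarrow> pre ?vis y < pre ?vis x \<longrightarrow>
       y \<notin> set (v#u#st) \<longrightarrow> (\<forall>s\<in>set (v#u#st). pre ?vis s < pre ?vis y \<or> pre ?vis x < pre ?vis s)"
    proof (intro allI impI ballI)
      fix x y s assume xy: "{x,y} \<in> EC" "x \<in> set ?vis" "y \<in> set ?vis" "pre ?vis y < pre ?vis x"
        "y \<notin> set (v#u#st)" "s \<in> set (v#u#st)"
      have yv: "y \<in> set vis" "y \<noteq> v" "y \<notin> set (u#st)" using xy(3,5) by auto
      show "pre ?vis s < pre ?vis y \<or> pre ?vis x < pre ?vis s"
      proof (cases "x = v")
        case True
        have "{y,x} \<in> EC" using xy(1) by (simp add: insert_commute)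
        then have "x \<in> set vis" using D(7)[OF yv(1) yv(3)] by blast
        then show ?thesis using True nv by simp
      next
        case False
        then have xv: "x \<in> set vis" using xy(2) by simp
        show ?thesis
        proof (cases "s = v")
          case True
          then show ?thesis using pa[OF xv] pv pb[OF xv] by simp
        next
          case False
          then have "s \<in> set (u#st)" using xy(6) by simp
          moreover have "s \<in> set vis" using calculation D(3) by auto
          ultimately show ?thesis using D(8)[OF xy(1) xv yv(1) _ yv(3)] xy(4) pa xv yv(1) by simp
        qed
      qed
    qed
    show "\<forall>a b. {a,b} \<in> ?Tr \<longrightarrow> a \<in> set ?vis \<longrightarrow> b \<in> set ?vis \<longrightarrow> pre ?vis a < pre ?vis b \<longrightarrow>
      (\<forall>s\<in>set (v#u#st). \<not> (pre ?vis a < pre ?vis s \<and> pre ?vis s < pre ?vis b))"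
    proof (intro allI impI ballI)
      fix a b s assume ab: "{a,b} \<in> ?Tr" "a \<in> set ?vis" "b \<in> set ?vis" "pre ?vis a < pre ?vis b"
        "s \<in> set (v#u#st)"
      show "\<not> (pre ?vis a < pre ?vis s \<and> pre ?vis s < pre ?vis b)"
      proof (cases "{a,b} = {u,v}")
        case True
        then have "(a = u \<and> b = v) \<or> (a = v \<and> b = u)" by (auto simp: doubleton_eq_iff)
        moreover have "\<not> (a = v \<and> b = u)" using ab(4) pa[OF uvis] pv pb[OF uvis] by auto
        ultimately have ab': "a = u" "b = v" by auto
        show ?thesis
        proof (cases "s = v \<or> s = u")
          case True
          then show ?thesis using ab' by auto
        next
          case False
          then have "s \<in> set st" using ab(5) by simp
          then show ?thesis using sou[of s] pa[OF uvis] pa[OF stvis[of s]] ab' by simp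
        qed
      next
        case False
        then have abT: "{a,b} \<in> Tr" using ab(1) by simp
        then have abv: "a \<in> set vis" "b \<in> set vis" using D(10)[OF abT] by auto
        show ?thesis
        proof (cases "s = v")
          case True
          then show ?thesis using pa[OF abv(2)] pv pb[OF abv(2)] by simp
        next
          case False
          then have "s \<in> set (u#st)" using ab(5) by simp
          moreover have "s \<in> set vis" using calculation D(3) by auto
          ultimately show ?thesis using D(9)[OF abT abv] ab(4) pa abv by simp
        qed
      qed
    qed
    show "\<forall>e\<in>?Tr. e \<subseteq> set ?vis" using D(10) uvis by auto
    show "\<forall>s\<in>set (v#u#st). \<forall>w\<in>set ?vis. pre ?vis s \<le> pre ?vis w \<longrightarrow> (s,w) \<in> (Hc EC ?vis ?Tr)\<^sup>*"
    proof (intro ballI impI)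
      fix s w assume sw: "s \<in> set (v#u#st)" "w \<in> set ?vis" "pre ?vis s \<le> pre ?vis w"
      show "(s,w) \<in> (Hc EC ?vis ?Tr)\<^sup>*"
      proof (cases "s = v")
        case True
        have "w = v"
        proof (rule ccontr)
          assume "w \<noteq> v"
          then have "w \<in> set vis" using sw(2) by simp
          then show False using sw(3) True pa pv pb by (metis Suc_n_not_le_n le_trans)
        qed
        then show ?thesis using True by simp
      next
        case False
        then have s1: "s \<in> set (u#st)" using sw(1) by simp
        then have svis: "s \<in> set vis" using D(3) by auto
        have "pre vis s \<le> pre vis u" using s1 sou by (auto intro: less_imp_le)
        then have su: "(s,u) \<in> (Hc EC ?vis ?Tr)\<^sup>*" using D(11)[OF s1 uvis] HH by blast
        show ?thesis
        proof (cases "w = v")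
          case True
          then show ?thesis using su uvH by simp
        next
          case False
          then have wv: "w \<in> set vis" using sw(2) by simp
          then have "pre vis s \<le> pre vis w" using sw(3) pa svis by simp
          then show ?thesis using D(11)[OF s1 wv] HH by blast
        qed
      qed
    qed
    show "\<forall>w\<in>set ?vis. (r,w) \<in> (Hc EC ?vis ?Tr)\<^sup>*"
    proof
      fix w assume "w \<in> set ?vis"
      then consider "w = v" | "w \<in> set vis" by auto
      then show "(r,w) \<in> (Hc EC ?vis ?Tr)\<^sup>*"
      proof cases
        case 1
        have "(r,u) \<in> (Hc EC ?vis ?Tr)\<^sup>*" using D(12)[OF uvis] HH by blast
        then show ?thesis using 1 uvH by simp
      next
        case 2
        then show ?thesis using D(12) HH by blast
      qed
    qed
    show "\<forall>w\<in>set ?vis. if v#u#st = [] then (w,r) \<in> (Hc EC ?vis ?Tr)\<^sup>*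
        else (\<exists>y\<in>set (v#u#st). (w,y) \<in> (Hc EC ?vis ?Tr)\<^sup>*)"
    proof
      fix w assume "w \<in> set ?vis"
      then consider "w = v" | "w \<in> set vis" by auto
      then show "if v#u#st = [] then (w,r) \<in> (Hc EC ?vis ?Tr)\<^sup>*
        else (\<exists>y\<in>set (v#u#st). (w,y) \<in> (Hc EC ?vis ?Tr)\<^sup>*)"
      proof cases
        case 1
        then show ?thesis by auto
      next
        case 2
        from D(14)[OF 2] obtain y where "y \<in> set (u#st)" "(w,y) \<in> (Hc EC vis Tr)\<^sup>*" by auto
        then show ?thesis using HH by auto
      qed
    qed
  qed
qed



definition nonbridged :: "'a set set \<Rightarrow> bool" where
  "nonbridged EC \<longleftrightarrow> (\<forall>x y. {x,y} \<in> EC \<longrightarrow> (x,y) \<in> (uedges (EC - {{x,y}}))\<^sup>*)"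

lemma key_pop:
  assumes I: "Inv EC r (u#p#rest) vis Tr" and nbh: "\<forall>z. {u,z} \<in> EC \<longrightarrow> z \<in> set vis"
    and NB: "nonbridged EC"
  shows "\<exists>y\<in>set (p#rest). (u,y) \<in> (Hc EC vis Tr)\<^sup>*"
proof -
  note D = InvD[OF I]
  let ?P = "pre vis"
  define S where "S = {w\<in>set vis. ?P u \<le> ?P w}"
  have uvis: "u \<in> set vis" and pvis: "p \<in> set vis" using D(3) by auto
  have srt: "\<forall>b\<in>set (p#rest). ?P b < ?P u" "\<forall>b\<in>set rest. ?P b < ?P p" using D(4) by simp_all
  have up: "{u,p} \<in> EC" using D(6) by simp
  have "(u,p) \<in> (uedges (EC - {{u,p}}))\<^sup>*" using NB up unfolding nonbridged_def by blast
  moreover have "u \<in> S" using uvis unfolding S_def by simp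
  moreover have "p \<notin> S" using srt unfolding S_def by auto
  ultimately have "\<exists>x y. (x,y) \<in> uedges (EC - {{u,p}}) \<and> x \<in> S \<and> y \<notin> S"
    by (rule crossing)
  then obtain x y where xy: "(x,y) \<in> uedges (EC - {{u,p}})" "x \<in> S" "y \<notin> S"
    by blast
  have xyE: "{x,y} \<in> EC" "{x,y} \<noteq> {u,p}" using xy(1) unfolding uedges_def by auto
  have xvis: "x \<in> set vis" and pux: "?P u \<le> ?P x" using xy(2) unfolding S_def by auto
  have stack_le: "?P s \<le> ?P u" if "s \<in> set (u#p#rest)" for s
    using that srt by (auto intro: less_imp_le)
  have yvis: "y \<in> set vis"
  proof (cases "x = u")
    case True
    then show ?thesis using nbh xyE(1) by blast
  next
    case False
    then have "?P x \<noteq> ?P u" using pre_inj[OF D(1) xvis uvis] by blast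
    then have "?P u < ?P x" using pux by simp
    then have "x \<notin> set (u#p#rest)" using stack_le by (meson leD)
    then show ?thesis using D(7)[OF xvis _ xyE(1)] by blast
  qed
  have pyu: "?P y < ?P u" using xy(3) yvis unfolding S_def by simp
  have yst: "y \<in> set (u#p#rest)"
  proof (rule ccontr)
    assume ny: "y \<notin> set (u#p#rest)"
    have "?P u < ?P y \<or> ?P x < ?P u"
      using D(8)[OF xyE(1) xvis yvis _ ny, of u] pyu pux by simp
    then show False using pyu pux by simp
  qed
  have yu: "y \<noteq> u" using pyu by auto
  then have yst': "y \<in> set (p#rest)" using yst by simp
  have nT: "{y,x} \<notin> Tr"
  proof
    assume T: "{y,x} \<in> Tr"
    have pyx: "?P y < ?P x" using pyu pux by simp
    have c1: "\<not> (?P y < ?P u \<and> ?P u < ?P x)" using D(9)[OF T yvis xvis pyx, of u] by simp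
    then have "?P x = ?P u" using pyu pux by simp
    then have xu: "x = u" using pre_inj[OF D(1) xvis uvis] by blast
    have c2: "\<not> (?P y < ?P p \<and> ?P p < ?P x)" using D(9)[OF T yvis xvis pyx, of p] by simp
    then have "?P p \<le> ?P y" using srt xu by auto
    moreover have "?P y \<le> ?P p" using yst' srt(2) by (auto intro: less_imp_le)
    ultimately have "?P y = ?P p" by simp
    then have "y = p" using pre_inj[OF D(1) yvis pvis] by blast
    then show False using xu xyE(2) by simp
  qed
  have "(x,y) \<in> Hc EC vis Tr"
  proof -
    have "{y,x} = {x,y}" by (rule insert_commute)
    then have "{y,x} \<in> EC" using xyE(1) by simp
    moreover have "?P y < ?P x" using pyu pux by simp
    ultimately show ?thesis using nT xvis yvis unfolding Hc_def by blast
  qed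
  moreover have "(u,x) \<in> (Hc EC vis Tr)\<^sup>*" using D(11)[of u x] xvis pux by simp
  ultimately show ?thesis using yst' by (meson rtrancl_into_rtrancl)
qed

lemma inv_backtrack:
  assumes I: "Inv EC r (u#st) vis Tr" and nbh: "\<forall>z. {u,z} \<in> EC \<longrightarrow> z \<in> set vis"
    and NB: "nonbridged EC"
  shows "Inv EC r st vis Tr"
proof -
  note D = InvD[OF I]
  let ?P = "pre vis"
  have sou: "\<forall>s\<in>set st. ?P s < ?P u" using D(4) by simp
  have unst: "u \<notin> set st" using sou by blast
  show ?thesis
    unfolding Inv_def
  proof (intro conjI)
    show "distinct vis" by (rule D(1))
    show "r \<in> set vis" by (rule D(2))
    show "set st \<subseteq> set vis" using D(3) by simp
    show "sorted_wrt (\<lambda>a b. pre vis b < pre vis a) st" using D(4) by simp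
    show "st \<noteq> [] \<longrightarrow> last st = r" using D(5) by (cases st) auto
    show "successively (\<lambda>a b. {a,b} \<in> EC) st" using D(6) by (cases st) (auto simp: successively_Cons)
    show "\<forall>y\<in>set vis - set st. \<forall>z. {y,z} \<in> EC \<longrightarrow> z \<in> set vis"
    proof (intro ballI allI impI)
      fix y z assume y: "y \<in> set vis - set st" and yz: "{y,z} \<in> EC"
      show "z \<in> set vis"
      proof (cases "y = u")
        case True
        then show ?thesis using nbh yz by blast
      next
        case False
        then have "y \<notin> set (u#st)" using y by simp
        then show ?thesis using D(7)[of y z] y yz by blast
      qed
    qed
    show "\<forall>x y. {x,y} \<in> EC \<longrightarrow> x \<in> set vis \<longrightarrow> y \<in> set vis \<longrightarrow> pre vis y < pre vis x \<longrightarrow>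
       y \<notin> set st \<longrightarrow> (\<forall>s\<in>set st. pre vis s < pre vis y \<or> pre vis x < pre vis s)"
    proof (intro allI impI ballI)
      fix x y s assume xy: "{x,y} \<in> EC" "x \<in> set vis" "y \<in> set vis" "pre vis y < pre vis x"
        "y \<notin> set st" "s \<in> set st"
      show "pre vis s < pre vis y \<or> pre vis x < pre vis s"
      proof (cases "y = u")
        case True
        then show ?thesis using sou xy(6) by simp
      next
        case False
        then have "y \<notin> set (u#st)" using xy(5) by simp
        moreover have "s \<in> set (u#st)" using xy(6) by simp
        ultimately show ?thesis using D(8)[OF xy(1-4)] by blast
      qed
    qed
    show "\<forall>a b. {a,b} \<in> Tr \<longrightarrow> a \<in> set vis \<longrightarrow> b \<in> set vis \<longrightarrow> pre vis a < pre vis b \<longrightarrow>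
      (\<forall>s\<in>set st. \<not> (pre vis a < pre vis s \<and> pre vis s < pre vis b))"
    proof (intro allI impI ballI)
      fix a b s assume "{a,b} \<in> Tr" "a \<in> set vis" "b \<in> set vis" "pre vis a < pre vis b" "s \<in> set st"
      moreover have "s \<in> set (u#st)" using calculation(5) by simp
      ultimately show "\<not> (pre vis a < pre vis s \<and> pre vis s < pre vis b)" using D(9) by blast
    qed
    show "\<forall>e\<in>Tr. e \<subseteq> set vis" using D(10) by simp
    show "\<forall>s\<in>set st. \<forall>w\<in>set vis. pre vis s \<le> pre vis w \<longrightarrow> (s,w) \<in> (Hc EC vis Tr)\<^sup>*"
    proof (intro ballI impI)
      fix s w assume "s \<in> set st" "w \<in> set vis" "pre vis s \<le> pre vis w"
      moreover have "s \<in> set (u#st)" using calculation(1) by simp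
      ultimately show "(s,w) \<in> (Hc EC vis Tr)\<^sup>*" using D(11) by blast
    qed
    show "\<forall>w\<in>set vis. (r,w) \<in> (Hc EC vis Tr)\<^sup>*" using D(12) by simp
    show "\<forall>w\<in>set vis. if st = [] then (w,r) \<in> (Hc EC vis Tr)\<^sup>*
        else (\<exists>y\<in>set st. (w,y) \<in> (Hc EC vis Tr)\<^sup>*)"
    proof
      fix w assume w: "w \<in> set vis"
      from D(14)[OF w] obtain y where y: "y \<in> set (u#st)" "(w,y) \<in> (Hc EC vis Tr)\<^sup>*" by auto
      show "if st = [] then (w,r) \<in> (Hc EC vis Tr)\<^sup>*
        else (\<exists>y\<in>set st. (w,y) \<in> (Hc EC vis Tr)\<^sup>*)"
      proof (cases st)
        case Nil
        then have "u = r" using D(5) by simp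
        then show ?thesis using y Nil by simp
      next
        case (Cons p rest)
        show ?thesis
        proof (cases "y = u")
          case False
          then show ?thesis using y Cons by auto
        next
          case True
          from key_pop[OF I[unfolded Cons] nbh NB] obtain y' where
            y': "y' \<in> set (p#rest)" "(u,y') \<in> (Hc EC vis Tr)\<^sup>*" by blast
          have "(w,y') \<in> (Hc EC vis Tr)\<^sup>*" using y(2) True y'(2) by simp
          then show ?thesis using y'(1) Cons by auto
        qed
      qed
    qed
  qed
qed

lemma dfs_inv:
  assumes "dfs_reach EC r st vis Tr" "nonbridged EC"
  shows "Inv EC r st vis Tr"
  using assms(1)
proof (induction rule: dfs_reach.induct)
  case start
  then show ?case by (rule inv_start)
next
  case (descend u st vis Tr v)
  from descend.IH descend.hyps(2,3) show ?case by (rule inv_descend)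
next
  case (backtrack u st vis Tr)
  show ?case by (rule inv_backtrack[OF backtrack.IH backtrack.hyps(2) assms(2)])
qed

lemma dfs_final:
  assumes "dfs_reach EC r [] vis Tr" "nonbridged EC"
  shows "r \<in> set vis" "\<And>y z. y \<in> set vis \<Longrightarrow> {y,z} \<in> EC \<Longrightarrow> z \<in> set vis"
    "\<And>a b. a \<in> set vis \<Longrightarrow> b \<in> set vis \<Longrightarrow> (a,b) \<in> (Hc EC vis Tr)\<^sup>*"
proof -
  note D = InvD[OF dfs_inv[OF assms]]
  show "r \<in> set vis" by (rule D(2))
  show "\<And>y z. y \<in> set vis \<Longrightarrow> {y,z} \<in> EC \<Longrightarrow> z \<in> set vis"
  proof -
    fix y z assume "y \<in> set vis" "{y,z} \<in> EC"
    moreover have "y \<notin> set []" by simp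
    ultimately show "z \<in> set vis" using D(7) by blast
  qed
  fix a b assume "a \<in> set vis" "b \<in> set vis"
  then show "(a,b) \<in> (Hc EC vis Tr)\<^sup>*" using D(12)[of b] D(13)[of a] by (meson rtrancl_trans)
qed



lemma greedy_mono:
  assumes "T0 \<subseteq> Eu" shows "(T0,T) \<in> (greedy_step Eu)^^K \<Longrightarrow> T0 \<subseteq> T \<and> T \<subseteq> Eu"
proof (induction K arbitrary: T)
  case 0
  then show ?case using assms by simp
next
  case (Suc K)
  from Suc.prems obtain S where S: "(T0,S) \<in> (greedy_step Eu)^^K" "(S,T) \<in> greedy_step Eu"
    by (rule relpow_Suc_E)
  from S(2) obtain u v where "{u,v} \<in> Eu - S" "T = insert {u,v} S" unfolding greedy_step_def by blast
  then show ?case using Suc.IH[OF S(1)] by blast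
qed

lemma closure_reach:
  assumes "(a,b) \<in> (uedges EC)\<^sup>*" "a \<in> X" "\<And>y z. y \<in> X \<Longrightarrow> {y,z} \<in> EC \<Longrightarrow> z \<in> X"
  shows "b \<in> X"
  using assms(1)
proof (induction rule: rtrancl_induct)
  case base then show ?case by (rule assms(2))
next
  case (step y z)
  then show ?case using assms(3) unfolding uedges_def by blast
qed

lemma strongly_conn_T:
  assumes finV: "finite V"
    and simplT: "\<forall>f\<in>T. \<exists>x y. f = {x,y} \<and> x\<in>V \<and> y\<in>V \<and> x\<noteq>y"
    and finT: "finite T"
    and conT: "uconnected V T"
    and out: "step3_output V T H"
  shows "strongly_connected V H"
proof -
  define Eb where "Eb = bridges V T"
  define Cs where "Cs = ucomponents V (T - Eb)"
  have ex: "\<exists>r vis Tr. (\<forall>C\<in>Cs. r C \<in> C \<and> dfs_reach (comp_edges T Eb C) (r C) [] (vis C) (Tr C)) \<and>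
       H = (\<Union>C\<in>Cs.
              {(u,v). {u,v} \<in> comp_edges T Eb C \<and> pre (vis C) u < pre (vis C) v \<and> {u,v} \<in> Tr C}
            \<union> {(v,u). {u,v} \<in> comp_edges T Eb C \<and> pre (vis C) u < pre (vis C) v \<and> {u,v} \<notin> Tr C})
           \<union> {(u,v). {u,v} \<in> Eb}"
    using out unfolding step3_output_def Let_def Cs_def Eb_def .
  from ex obtain r vis Tr where
    rvT: "\<forall>C\<in>Cs. r C \<in> C \<and> dfs_reach (comp_edges T Eb C) (r C) [] (vis C) (Tr C)" and
    H: "H = (\<Union>C\<in>Cs.
              {(u,v). {u,v} \<in> comp_edges T Eb C \<and> pre (vis C) u < pre (vis C) v \<and> {u,v} \<in> Tr C}
            \<union> {(v,u). {u,v} \<in> comp_edges T Eb C \<and> pre (vis C) u < pre (vis C) v \<and> {u,v} \<notin> Tr C})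
           \<union> {(u,v). {u,v} \<in> Eb}"
    by (elim exE conjE)
  have simplF: "\<forall>f\<in>T - Eb. \<exists>x y. f={x,y} \<and> x\<in>V \<and> y\<in>V" using simplT by blast
  have edge: "(a,b) \<in> H\<^sup>*" if ab: "{a,b} \<in> T" for a b
  proof (cases "{a,b} \<in> Eb")
    case True
    then have "(a,b) \<in> {(u,v). {u,v} \<in> Eb}" by simp
    then have "(a,b) \<in> H" unfolding H by (rule UnI2)
    then show ?thesis by (rule r_into_rtrancl)
  next
    case False
    obtain x y where xy: "{a,b} = {x,y}" "x\<in>V" "y\<in>V" using simplT ab by blast
    have aV: "a \<in> V" and bV: "b \<in> V" using xy by (auto simp: doubleton_eq_iff)
    define C where "C = {v\<in>V. (a,v) \<in> (uedges (T - Eb))\<^sup>*}"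
    define EC where "EC = comp_edges T Eb C"
    have EC_eq: "EC = {f\<in>T - Eb. f \<subseteq> C}" unfolding EC_def comp_edges_def by simp
    have CCs: "C \<in> Cs" unfolding C_def Cs_def ucomponents_def using aV by blast
    have rCd: "r C \<in> C \<and> dfs_reach (comp_edges T Eb C) (r C) [] (vis C) (Tr C)"
      using rvT CCs by (rule bspec)
    have rC: "r C \<in> C" using rCd by (rule conjunct1)
    have dfs: "dfs_reach EC (r C) [] (vis C) (Tr C)" unfolding EC_def using rCd by (rule conjunct2)
    have aC: "a \<in> C" unfolding C_def using aV by simp
    have abF: "(a,b) \<in> uedges (T - Eb)" using ab False unfolding uedges_def by simp
    have bC: "b \<in> C" unfolding C_def using bV abF by simp
    have NB: "nonbridged EC"
      unfolding nonbridged_def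
    proof (intro allI impI)
      fix x y assume xyE: "{x,y} \<in> EC"
      then have xyT: "{x,y} \<in> T - Eb" and xyC: "{x,y} \<subseteq> C" using EC_eq by auto
      have xV: "x \<in> V" and yV: "y \<in> V" using xyC unfolding C_def by auto
      have xyT1: "{x,y} \<in> T" and xyT2: "{x,y} \<notin> bridges V T" using xyT unfolding Eb_def by auto
      have "(x,y) \<in> (uedges ((T - bridges V T) - {{x,y}}))\<^sup>*"
        by (rule nb2[OF finV simplT finT refl xyT1 xyT2 xV yV])
      then have "(x,y) \<in> (uedges ((T - Eb) - {{x,y}}))\<^sup>*" unfolding Eb_def .
      moreover have "(T - Eb) - {{x,y}} \<subseteq> T - Eb" by (rule Diff_subset)
      moreover have "x \<in> C" using xyC by simp
      ultimately have "(x,y) \<in> (uedges {f\<in>(T - Eb) - {{x,y}}. f \<subseteq> C})\<^sup>*"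
        using restrict_comp[OF _ _ simplF C_def] by blast
      moreover have "{f\<in>(T - Eb) - {{x,y}}. f \<subseteq> C} = EC - {{x,y}}" using EC_eq by blast
      ultimately show "(x,y) \<in> (uedges (EC - {{x,y}}))\<^sup>*" by simp
    qed
    note F = dfs_final[OF dfs NB]
    have Cvis: "w \<in> set (vis C)" if wC: "w \<in> C" for w
    proof -
      have "(a, r C) \<in> (uedges (T - Eb))\<^sup>*" using rC unfolding C_def by simp
      then have "(r C, a) \<in> (uedges (T - Eb))\<^sup>*" by (rule rt_sym)
      moreover have "(a, w) \<in> (uedges (T - Eb))\<^sup>*" using wC unfolding C_def by simp
      ultimately have "(r C, w) \<in> (uedges (T - Eb))\<^sup>*" by (rule rtrancl_trans)
      from restrict_comp[OF this order_refl simplF C_def rC]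
      have "(r C, w) \<in> (uedges EC)\<^sup>*" using EC_eq by simp
      then show ?thesis using F(1) by (rule closure_reach) (rule F(2))
    qed
    have HcH: "Hc EC (vis C) (Tr C) \<subseteq> H"
    proof
      fix p assume "p \<in> Hc EC (vis C) (Tr C)"
      then obtain x y where p: "p = (x,y)" and
        c: "({x,y} \<in> EC \<and> pre (vis C) x < pre (vis C) y \<and> {x,y} \<in> Tr C) \<or>
            ({y,x} \<in> EC \<and> pre (vis C) y < pre (vis C) x \<and> {y,x} \<notin> Tr C)"
        unfolding Hc_def by blast
      let ?A = "{(u,v). {u,v} \<in> comp_edges T Eb C \<and> pre (vis C) u < pre (vis C) v \<and> {u,v} \<in> Tr C}"
      let ?B = "{(v,u). {u,v} \<in> comp_edges T Eb C \<and> pre (vis C) u < pre (vis C) v \<and> {u,v} \<notin> Tr C}"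
      have "(x,y) \<in> ?A \<union> ?B" using c unfolding EC_def by blast
      then have "(x,y) \<in> (\<Union>C\<in>Cs.
              {(u,v). {u,v} \<in> comp_edges T Eb C \<and> pre (vis C) u < pre (vis C) v \<and> {u,v} \<in> Tr C}
            \<union> {(v,u). {u,v} \<in> comp_edges T Eb C \<and> pre (vis C) u < pre (vis C) v \<and> {u,v} \<notin> Tr C})"
        by (rule UN_I[OF CCs])
      then show "p \<in> H" unfolding H p by (rule UnI1)
    qed
    have "(a,b) \<in> (Hc EC (vis C) (Tr C))\<^sup>*" by (rule F(3)[OF Cvis[OF aC] Cvis[OF bC]])
    then show ?thesis using rtrancl_mono[OF HcH] by (rule subsetD[rotated])
  qed
  have "uedges T \<subseteq> H\<^sup>*" using edge unfolding uedges_def by blast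
  then have "(uedges T)\<^sup>* \<subseteq> H\<^sup>*" by (rule rtrancl_subset_rtrancl)
  then show ?thesis using conT unfolding uconnected_def strongly_connected_def by blast
qed



lemma tree_bridges:
  assumes finV: "finite V" and simplT: "\<forall>f\<in>T. \<exists>x y. f = {x,y} \<and> x\<in>V \<and> y\<in>V \<and> x\<noteq>y"
    and nocyc: "\<nexists>xs. ucycle T xs"
  shows "bridges V T = T"
proof
  show "bridges V T \<subseteq> T" unfolding bridges_def by blast
  show "T \<subseteq> bridges V T"
  proof
    fix e assume e: "e \<in> T"
    then obtain a b where ab: "e = {a,b}" "a \<in> V" "b \<in> V" "a \<noteq> b" using simplT by blast
    have "(a,b) \<notin> (uedges (T-{e}))\<^sup>*" by (rule tree_edge_disconn[OF nocyc ab(1) e ab(4)])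
    then show "e \<in> bridges V T" by (rule disconn_bridge[OF finV ab(1) e ab(2,3)])
  qed
qed

lemma deg_eq:
  assumes simplT: "\<forall>f\<in>T. \<exists>x y. f = {x,y} \<and> x\<noteq>y"
  shows "card {w. (v,w) \<in> uedges T} = udeg T v" "card {w. (w,v) \<in> uedges T} = udeg T v"
proof -
  have s1: "{w. (v,w) \<in> uedges T} = {w. {v,w} \<in> T}" unfolding uedges_def by simp
  have s2: "{w. (w,v) \<in> uedges T} = {w. {v,w} \<in> T}" unfolding uedges_def by (simp add: insert_commute)
  have inj: "inj_on (\<lambda>w. {v,w}) {w. {v,w} \<in> T}"
    by (rule inj_onI) (auto simp: doubleton_eq_iff)
  have img: "(\<lambda>w. {v,w}) ` {w. {v,w} \<in> T} = {e\<in>T. v \<in> e}"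
  proof
    show "(\<lambda>w. {v,w}) ` {w. {v,w} \<in> T} \<subseteq> {e\<in>T. v \<in> e}" by auto
    show "{e\<in>T. v \<in> e} \<subseteq> (\<lambda>w. {v,w}) ` {w. {v,w} \<in> T}"
    proof
      fix e assume e: "e \<in> {e\<in>T. v \<in> e}"
      then obtain x y where xy: "e = {x,y}" using simplT by blast
      have "v = x \<or> v = y" using e xy by auto
      then obtain w where "e = {v,w}" using xy by (metis insert_commute)
      then show "e \<in> (\<lambda>w. {v,w}) ` {w. {v,w} \<in> T}" using e by blast
    qed
  qed
  have "card {w. {v,w} \<in> T} = udeg T v" unfolding udeg_def using card_image[OF inj] img by simp
  then show "card {w. (v,w) \<in> uedges T} = udeg T v" "card {w. (w,v) \<in> uedges T} = udeg T v"
    using s1 s2 by simp_all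
qed

lemma phi_tree:
  assumes simplT: "\<forall>f\<in>T. \<exists>x y. f = {x,y} \<and> x\<noteq>y"
  shows "Phi V (uedges T) = 2 * umaxdeg V T * (udiam V T)^2 * (1 + umaxdeg V T) ^ (4 * udiam V T)"
proof -
  have o: "outdeg_max V (uedges T) = umaxdeg V T"
    unfolding outdeg_max_def umaxdeg_def using deg_eq(1)[OF simplT] by simp
  have i: "indeg_max V (uedges T) = umaxdeg V T"
    unfolding indeg_max_def umaxdeg_def using deg_eq(2)[OF simplT] by simp
  have d: "ddiam V (uedges T) = udiam V T"
    unfolding ddiam_def udiam_def ddist_def udist_def by simp
  show ?thesis unfolding Phi_def o i d by simp
qed



lemma H0_eq:
  assumes out: "step3_output V T H" and tb: "bridges V T = T"
  shows "H = uedges T"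
proof -
  have ce: "comp_edges T T C = {}" for C unfolding comp_edges_def by simp
  from out obtain r vis Tr where
    H: "H = (\<Union>C\<in>ucomponents V (T - bridges V T).
              {(u,v). {u,v} \<in> comp_edges T (bridges V T) C \<and> pre (vis C) u < pre (vis C) v \<and> {u,v} \<in> Tr C}
            \<union> {(v,u). {u,v} \<in> comp_edges T (bridges V T) C \<and> pre (vis C) u < pre (vis C) v \<and> {u,v} \<notin> Tr C})
           \<union> {(u,v). {u,v} \<in> bridges V T}"
    unfolding step3_output_def Let_def by blast
  show ?thesis unfolding H tb ce uedges_def by simp
qed

theorem theorem2:
  fixes V :: "'a set" and Eu T0 :: "'a set set" and H :: "nat \<Rightarrow> ('a \<times> 'a) set"
  assumes "simple_ugraph V Eu"
    and "uconnected V Eu"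
    and "card V \<ge> 2"
    and "spanning_tree V Eu T0"
    and "\<forall>K \<le> card (Eu - T0). \<exists>T. (T0, T) \<in> (greedy_step Eu) ^^ K \<and> step3_output V T (H K)"
  shows "(\<forall>K \<le> card (Eu - T0). strongly_connected V (H K)) \<and>
         Min ((\<lambda>K. Phi V (H K)) ` {0 .. card (Eu - T0)})
           \<le> 2 * umaxdeg V T0 * (udiam V T0)^2 * (1 + umaxdeg V T0) ^ (4 * udiam V T0)"
proof -
  have finV: "finite V" using assms(1) unfolding simple_ugraph_def by blast
  have EuS: "Eu \<subseteq> {{u,v} | u v. u \<in> V \<and> v \<in> V \<and> u \<noteq> v}" using assms(1) unfolding simple_ugraph_def by blast
  have simplEu: "\<forall>f\<in>Eu. \<exists>x y. f = {x,y} \<and> x\<in>V \<and> y\<in>V \<and> x\<noteq>y" using EuS by blast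
  have "Eu \<subseteq> Pow V" using EuS by blast
  then have finEu: "finite Eu" using finV by (meson finite_Pow_iff finite_subset)
  have T0Eu: "T0 \<subseteq> Eu" and conT0: "uconnected V T0" and nocyc: "\<nexists>xs. ucycle T0 xs"
    using assms(4) unfolding spanning_tree_def by blast+
  have part1: "strongly_connected V (H K)" if K: "K \<le> card (Eu - T0)" for K
  proof -
    from assms(5) K obtain T where T: "(T0, T) \<in> (greedy_step Eu) ^^ K" "step3_output V T (H K)" by blast
    have TT: "T0 \<subseteq> T" "T \<subseteq> Eu" using greedy_mono[OF T0Eu T(1)] by blast+
    have simplT: "\<forall>f\<in>T. \<exists>x y. f = {x,y} \<and> x\<in>V \<and> y\<in>V \<and> x\<noteq>y" using simplEu TT(2) by blast
    have finT: "finite T" using finEu TT(2) by (rule finite_subset[rotated])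
    have conT: "uconnected V T" using conT0 rt_mono[OF TT(1)] unfolding uconnected_def by blast
    show ?thesis by (rule strongly_conn_T[OF finV simplT finT conT T(2)])
  qed
  have part2: "Phi V (H 0) = 2 * umaxdeg V T0 * (udiam V T0)^2 * (1 + umaxdeg V T0) ^ (4 * udiam V T0)"
  proof -
    from assms(5) obtain T where T: "(T0, T) \<in> (greedy_step Eu) ^^ 0" "step3_output V T (H 0)" by blast
    have "T = T0" using T(1) by simp
    then have out: "step3_output V T0 (H 0)" using T(2) by simp
    have simplT0: "\<forall>f\<in>T0. \<exists>x y. f = {x,y} \<and> x\<in>V \<and> y\<in>V \<and> x\<noteq>y" using simplEu T0Eu by blast
    have tb: "bridges V T0 = T0" by (rule tree_bridges[OF finV simplT0 nocyc])
    have "H 0 = uedges T0" by (rule H0_eq[OF out tb])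
    moreover have "\<forall>f\<in>T0. \<exists>x y. f = {x,y} \<and> x\<noteq>y" using simplT0 by blast
    ultimately show ?thesis using phi_tree by metis
  qed
  have "Min ((\<lambda>K. Phi V (H K)) ` {0 .. card (Eu - T0)}) \<le> Phi V (H 0)"
    by (rule Min_le) auto
  then show ?thesis using part1 part2 by simp
qed


end
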